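(* Let $\{G_i\}$ be a family of graphs with common induced subgraph $J$, embedded as $J_i\subseteq G_i$, and let $H=\amalg\{(G_i|J_i)\}$. If the diameter of $J$ is at most $2$, then every $G_i$ is isometrically embedded in $H$.
   Context: $d_G$ is shortest-path distance in $G$. $J$ is a common induced subgraph of each $G_i$ via injective maps $\iota_i:V(J)\to V(G_i)$ with $\iota_i(x)\iota_i(y)\in E(G_i)$ iff $xy\in E(J)$; $J_i$ is the induced image. $H=\amalg\{(G_i|J_i)\}$ is obtained from the disjoint union of the $G_i$ by identifying, for each $x\in V(J)$, all vertices $\iota_i(x)$ into one vertex; each $G_i$ is regarded as a subgraph of $H$. A subgraph $G$ of $H$ is isometrically embedded in $H$ if $d_G(u,v)=d_H(u,v)$ for all $u,v\in V(G)$. *)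

theory Defs
  imports Main "HOL-Library.Extended_Nat"
begin

definition is_graph :: "'a set \<Rightarrow> ('a \<Rightarrow> 'a \<Rightarrow> bool) \<Rightarrow> bool" where
  "is_graph V E \<longleftrightarrow> (\<forall>x y. E x y \<longrightarrow> x \<in> V \<and> y \<in> V) \<and> (\<forall>x y. E x y \<longrightarrow> E y x) \<and> (\<forall>x. \<not> E x x)"

definition walks :: "('a \<Rightarrow> 'a \<Rightarrow> bool) \<Rightarrow> 'a \<Rightarrow> 'a \<Rightarrow> 'a list set" where
  "walks E u v = {xs. xs \<noteq> [] \<and> hd xs = u \<and> last xs = v \<and>
                   (\<forall>k. Suc k < length xs \<longrightarrow> E (xs ! k) (xs ! Suc k))}"

definition gdist :: "('a \<Rightarrow> 'a \<Rightarrow> bool) \<Rightarrow> 'a \<Rightarrow> 'a \<Rightarrow> enat" where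
  "gdist E u v = (INF xs \<in> walks E u v. enat (length xs - 1))"

text \<open>Vertices of H: Inl x for x in V(J) (the identified
  vertices \<iota> i x), and Inr (i, v) for a vertex v of G_i not in J_i.
  amal_emb VJ \<iota> i is the canonical map G_i \<rightarrow> H.\<close>
definition amal_emb :: "'j set \<Rightarrow> ('i \<Rightarrow> 'j \<Rightarrow> 'v) \<Rightarrow> 'i \<Rightarrow> 'v \<Rightarrow> 'j + ('i \<times> 'v)" where
  "amal_emb VJ \<iota> i v = (if v \<in> \<iota> i ` VJ then Inl (the_inv_into VJ (\<iota> i) v) else Inr (i, v))"

definition amal_V :: "'i set \<Rightarrow> ('i \<Rightarrow> 'v set) \<Rightarrow> 'j set \<Rightarrow> ('i \<Rightarrow> 'j \<Rightarrow> 'v) \<Rightarrow> ('j + ('i \<times> 'v)) set" where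
  "amal_V I V VJ \<iota> = (\<Union>i\<in>I. amal_emb VJ \<iota> i ` V i)"

definition amal_E :: "'i set \<Rightarrow> ('i \<Rightarrow> 'v \<Rightarrow> 'v \<Rightarrow> bool) \<Rightarrow> 'j set \<Rightarrow> ('i \<Rightarrow> 'j \<Rightarrow> 'v)
                      \<Rightarrow> 'j + ('i \<times> 'v) \<Rightarrow> 'j + ('i \<times> 'v) \<Rightarrow> bool" where
  "amal_E I E VJ \<iota> a b = (\<exists>i\<in>I. \<exists>u v. E i u v \<and> a = amal_emb VJ \<iota> i u \<and> b = amal_emb VJ \<iota> i v)"

end

theory Submission imports Defs begin

lemma gdist_le_walk: "xs \<in> walks E a b \<Longrightarrow> gdist E a b \<le> enat (length xs - 1)"
  unfolding gdist_def by (rule INF_lower)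

lemma gdist_refl: "gdist E a a = 0"
proof -
  have "[a] \<in> walks E a a" by (simp add: walks_def)
  from gdist_le_walk[OF this] show ?thesis by (simp add: zero_enat_def[symmetric])
qed

lemma gdist_attained:
  assumes "gdist E a b \<noteq> \<infinity>"
  shows "\<exists>xs\<in>walks E a b. gdist E a b = enat (length xs - 1)"
proof -
  have ne: "walks E a b \<noteq> {}" using assms by (auto simp: gdist_def top_enat_def)
  let ?A = "(\<lambda>xs. enat (length xs - 1)) ` walks E a b"
  have "Inf ?A \<in> ?A" using ne unfolding Inf_enat_def by (auto intro: LeastI)
  then show ?thesis unfolding gdist_def by auto
qed

lemma walk_snoc:
  assumes "xs \<in> walks E a b" "E b c"
  shows "xs @ [c] \<in> walks E a c"
proof -
  have ne: "xs \<noteq> []" "hd xs = a" "last xs = b"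
    and w: "\<forall>k. Suc k < length xs \<longrightarrow> E (xs ! k) (xs ! Suc k)" using assms(1) by (auto simp: walks_def)
  have "E ((xs@[c]) ! k) ((xs@[c]) ! Suc k)" if "Suc k < length (xs@[c])" for k
  proof (cases "Suc k < length xs")
    case True thus ?thesis using w by (simp add: nth_append)
  next
    case False
    then have "k = length xs - 1" using that by simp
    then show ?thesis using ne assms(2) by (simp add: nth_append last_conv_nth)
  qed
  then show ?thesis using ne by (auto simp: walks_def)
qed

lemma gdist_snoc: "E b c \<Longrightarrow> gdist E a c \<le> gdist E a b + 1"
proof (cases "gdist E a b = \<infinity>")
  case True thus ?thesis by simp
next
  case False
  assume e: "E b c"
  from gdist_attained[OF False] obtain xs where xs: "xs \<in> walks E a b" "gdist E a b = enat (length xs - 1)" by blast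
  have "xs \<noteq> []" using xs by (auto simp: walks_def)
  from gdist_le_walk[OF walk_snoc[OF xs(1) e]] show ?thesis using xs(2) \<open>xs \<noteq> []\<close>
    by (simp add: one_enat_def)
qed

lemma gdist_walk_tri: "ys \<in> walks E b c \<Longrightarrow> gdist E a c \<le> gdist E a b + enat (length ys - 1)"
proof (induction ys arbitrary: c rule: rev_induct)
  case Nil thus ?case by (simp add: walks_def)
next
  case (snoc y zs c)
  show ?case
  proof (cases "zs = []")
    case True
    then have "[y] \<in> walks E b c" using snoc.prems by simp
    then have "y = b" "y = c" unfolding walks_def by auto
    then have "b = c" by simp
    thus ?thesis using True by (simp add: zero_enat_def[symmetric])
  next
    case False
    have p: "\<forall>k. Suc k < length (zs@[y]) \<longrightarrow> E ((zs@[y])!k) ((zs@[y])!Suc k)"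
      and h: "hd (zs@[y]) = b" and l: "last (zs@[y]) = c" using snoc.prems unfolding walks_def mem_Collect_eq by blast+
    have "E (zs!k) (zs!Suc k)" if "Suc k < length zs" for k
      using p[rule_format, of k] that by (simp add: nth_append)
    moreover have "hd zs = b" using h False by simp
    ultimately have zw: "zs \<in> walks E b (last zs)" using False by (simp add: walks_def)
    obtain n where n: "length zs = Suc n" using False by (cases zs) auto
    have "E ((zs@[y])!n) ((zs@[y])!Suc n)" using p n by simp
    moreover have "(zs@[y])!n = last zs" using n False by (simp add: nth_append last_conv_nth)
    moreover have "(zs@[y])!Suc n = c" using n l by (simp add: nth_append)
    ultimately have e: "E (last zs) c" by simp
    have "gdist E a c \<le> gdist E a (last zs) + 1" by (rule gdist_snoc[where E=E, OF e])
    also have "\<dots> \<le> gdist E a b + enat (length zs - 1) + 1" using snoc.IH[OF zw] by (simp add: add_right_mono)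
    also have "\<dots> = gdist E a b + enat (length (zs @ [y]) - 1)" using n
      by (simp add: one_enat_def add.assoc)
    finally show ?thesis .
  qed
qed

lemma gdist_tri: "gdist E a c \<le> gdist E a b + gdist E b c"
proof (cases "gdist E b c = \<infinity>")
  case True thus ?thesis by simp
next
  case False
  from gdist_attained[OF False] obtain ys where "ys \<in> walks E b c" "gdist E b c = enat (length ys - 1)" by blast
  thus ?thesis using gdist_walk_tri by metis
qed

lemma gdist_hom:
  assumes "\<And>x y. E x y \<Longrightarrow> E' (f x) (f y)"
  shows "gdist E' (f a) (f b) \<le> gdist E a b"
  unfolding gdist_def
proof (rule INF_mono)
  fix xs assume "xs \<in> walks E a b"
  then have "map f xs \<in> walks E' (f a) (f b)" using assms
    by (auto simp: walks_def hd_map last_map)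
  then show "\<exists>ys\<in>walks E' (f a) (f b). enat (length ys - 1) \<le> enat (length xs - 1)" by force
qed


lemma enat_Suc_eq: "enat (Suc k) = enat k + 1" by (simp add: one_enat_def)

context
  fixes I :: "'i set" and V :: "'i \<Rightarrow> 'v set" and E :: "'i \<Rightarrow> 'v \<Rightarrow> 'v \<Rightarrow> bool"
    and VJ :: "'j set" and EJ :: "'j \<Rightarrow> 'j \<Rightarrow> bool" and \<iota> :: "'i \<Rightarrow> 'j \<Rightarrow> 'v"
  assumes G: "\<forall>i\<in>I. is_graph (V i) (E i)"
    and GJ: "is_graph VJ EJ"
    and inj: "\<forall>i\<in>I. inj_on (\<iota> i) VJ \<and> \<iota> i ` VJ \<subseteq> V i"
    and ind: "\<forall>i\<in>I. \<forall>x\<in>VJ. \<forall>y\<in>VJ. E i (\<iota> i x) (\<iota> i y) \<longleftrightarrow> EJ x y"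
begin

lemma emb_Inl: "i \<in> I \<Longrightarrow> amal_emb VJ \<iota> i w = Inl x \<Longrightarrow> x \<in> VJ \<and> w = \<iota> i x"
  using inj unfolding amal_emb_def
  by (auto split: if_splits intro: the_inv_into_into simp: f_the_inv_into_f)

lemma emb_Inr: "amal_emb VJ \<iota> j w = Inr p \<Longrightarrow> p = (j, w)"
  unfolding amal_emb_def by (simp split: if_splits)

lemma emb_iota: "i \<in> I \<Longrightarrow> x \<in> VJ \<Longrightarrow> amal_emb VJ \<iota> i (\<iota> i x) = Inl x"
  using inj unfolding amal_emb_def by (auto simp: the_inv_into_f_f)

lemma emb_inj: "i \<in> I \<Longrightarrow> amal_emb VJ \<iota> i w = amal_emb VJ \<iota> i w' \<Longrightarrow> w = w'"
proof (cases "amal_emb VJ \<iota> i w")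
  case (Inl x)
  assume "i \<in> I" "amal_emb VJ \<iota> i w = amal_emb VJ \<iota> i w'"
  then show ?thesis using Inl emb_Inl by metis
next
  case (Inr p)
  assume "i \<in> I" "amal_emb VJ \<iota> i w = amal_emb VJ \<iota> i w'"
  then show ?thesis using Inr emb_Inr by (metis prod.inject)
qed

lemma edge_in:
  assumes i: "i \<in> I" and e: "amal_E I E VJ \<iota> (amal_emb VJ \<iota> i w) (amal_emb VJ \<iota> i w')"
  shows "E i w w'"
proof -
  obtain j u v where j: "j \<in> I" "E j u v" and a: "amal_emb VJ \<iota> i w = amal_emb VJ \<iota> j u"
    and b: "amal_emb VJ \<iota> i w' = amal_emb VJ \<iota> j v"
    using e unfolding amal_E_def by blast
  show ?thesis
  proof (cases "j = i")
    case True thus ?thesis using emb_inj[OF i] a b j by metis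
  next
    case False
    have "\<exists>x\<in>VJ. w = \<iota> i x \<and> u = \<iota> j x" if "amal_emb VJ \<iota> i w = amal_emb VJ \<iota> j u" for w u
    proof (cases "amal_emb VJ \<iota> i w")
      case (Inl x) thus ?thesis using that emb_Inl i j by metis
    next
      case (Inr p) thus ?thesis using that emb_Inr False by (metis prod.inject)
    qed
    from this[OF a] this[OF b] obtain x y where xy: "x \<in> VJ" "y \<in> VJ" "w = \<iota> i x" "u = \<iota> j x"
      "w' = \<iota> i y" "v = \<iota> j y" by blast
    then have "EJ x y" using ind j by auto
    then show ?thesis using ind i xy by auto
  qed
qed

lemma edge_out:
  assumes i: "i \<in> I" and e: "amal_E I E VJ \<iota> a b"
    and "a = amal_emb VJ \<iota> i w \<and> b \<notin> amal_emb VJ \<iota> i ` V i \<or>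
         b = amal_emb VJ \<iota> i w \<and> a \<notin> amal_emb VJ \<iota> i ` V i"
  shows "\<exists>x\<in>VJ. w = \<iota> i x"
proof -
  obtain j u v where j: "j \<in> I" "E j u v" and a: "a = amal_emb VJ \<iota> j u"
    and b: "b = amal_emb VJ \<iota> j v"
    using e unfolding amal_E_def by blast
  have uv: "u \<in> V j" "v \<in> V j" using G j unfolding is_graph_def by auto
  have ji: "j \<noteq> i" using assms(3) a b uv by auto
  have "amal_emb VJ \<iota> i w = amal_emb VJ \<iota> j u \<or> amal_emb VJ \<iota> i w = amal_emb VJ \<iota> j v"
    using assms(3) a b by auto
  then obtain z where z: "amal_emb VJ \<iota> i w = amal_emb VJ \<iota> j z" by blast
  show ?thesis
  proof (cases "amal_emb VJ \<iota> i w")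
    case (Inl x) thus ?thesis using emb_Inl i by metis
  next
    case (Inr p) thus ?thesis using z emb_Inr ji by (metis prod.inject)
  qed
qed

lemma iota_dist: "i \<in> I \<Longrightarrow> gdist (E i) (\<iota> i x) (\<iota> i y) \<le> gdist EJ x y"
  by (rule gdist_hom) (use GJ ind in \<open>auto simp: is_graph_def\<close>)

lemma walk_back:
  assumes i: "i \<in> I" and u: "u \<in> V i"
    and xs: "xs \<in> walks (amal_E I E VJ \<iota>) (amal_emb VJ \<iota> i u) c"
    and diam: "\<forall>x\<in>VJ. \<forall>y\<in>VJ. gdist EJ x y \<le> 2"
  shows "k < length xs \<Longrightarrow>
    (\<forall>w\<in>V i. xs!k = amal_emb VJ \<iota> i w \<longrightarrow> gdist (E i) u w \<le> enat k) \<and>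
    (xs!k \<notin> amal_emb VJ \<iota> i ` V i \<longrightarrow> (\<exists>x\<in>VJ. gdist (E i) u (\<iota> i x) + 1 \<le> enat k))"
proof (induction k)
  case 0
  have "xs ! 0 = amal_emb VJ \<iota> i u" using xs unfolding walks_def by (auto simp: hd_conv_nth)
  moreover have "w = u" if "amal_emb VJ \<iota> i u = amal_emb VJ \<iota> i w" for w
    using emb_inj[OF i that] by simp
  ultimately show ?case using gdist_refl[of "E i" u] u by (auto simp: zero_enat_def[symmetric])
next
  case (Suc k)
  let ?c = "xs ! k" and ?c' = "xs ! Suc k"
  have IH1: "\<forall>w\<in>V i. ?c = amal_emb VJ \<iota> i w \<longrightarrow> gdist (E i) u w \<le> enat k"
    and IH2: "?c \<notin> amal_emb VJ \<iota> i ` V i \<longrightarrow> (\<exists>x\<in>VJ. gdist (E i) u (\<iota> i x) + 1 \<le> enat k)"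
    using Suc by auto
  have e: "amal_E I E VJ \<iota> ?c ?c'" using xs Suc.prems by (simp add: walks_def)
  have P1: "gdist (E i) u w' \<le> enat (Suc k)" if w': "w' \<in> V i" "?c' = amal_emb VJ \<iota> i w'" for w'
  proof (cases "?c \<in> amal_emb VJ \<iota> i ` V i")
    case True
    then obtain w where w: "w \<in> V i" "?c = amal_emb VJ \<iota> i w" by blast
    have "E i w w'" using edge_in[OF i] e w w' by simp
    then have "gdist (E i) u w' \<le> gdist (E i) u w + 1" by (rule gdist_snoc)
    also have "\<dots> \<le> enat k + 1" using IH1 w by (simp add: add_right_mono)
    finally show ?thesis by (simp add: enat_Suc_eq)
  next
    case False
    then obtain x where x: "x \<in> VJ" "gdist (E i) u (\<iota> i x) + 1 \<le> enat k" using IH2 by blast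
    obtain y where y: "y \<in> VJ" "w' = \<iota> i y" using edge_out[OF i e] w' False by blast
    have "gdist (E i) u w' \<le> gdist (E i) u (\<iota> i x) + gdist (E i) (\<iota> i x) (\<iota> i y)"
      using y gdist_tri by metis
    also have "\<dots> \<le> gdist (E i) u (\<iota> i x) + 2"
      using iota_dist[OF i, of x y] diam x y by (metis add_left_mono order_trans)
    also have "\<dots> = (gdist (E i) u (\<iota> i x) + 1) + 1" by (simp add: add.assoc one_add_one[symmetric] del: one_add_one)
    also have "\<dots> \<le> enat k + 1" using x by (simp add: add_right_mono)
    finally show ?thesis by (simp add: enat_Suc_eq)
  qed
  have P2: "\<exists>x\<in>VJ. gdist (E i) u (\<iota> i x) + 1 \<le> enat (Suc k)" if out: "?c' \<notin> amal_emb VJ \<iota> i ` V i"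
  proof (cases "?c \<in> amal_emb VJ \<iota> i ` V i")
    case True
    then obtain w where w: "w \<in> V i" "?c = amal_emb VJ \<iota> i w" by blast
    obtain x where x: "x \<in> VJ" "w = \<iota> i x" using edge_out[OF i e] w out by blast
    have "gdist (E i) u w + 1 \<le> enat k + 1" using IH1 w by (simp add: add_right_mono)
    then show ?thesis using x by (auto simp: enat_Suc_eq)
  next
    case False
    then obtain x where x: "x \<in> VJ" "gdist (E i) u (\<iota> i x) + 1 \<le> enat k" using IH2 by blast
    have "enat k \<le> enat (Suc k)" by simp
    then show ?thesis using x order_trans by blast
  qed
  show ?case using P1 P2 by blast
qed

end

theorem lemma3:
  fixes I :: "'i set" and V :: "'i \<Rightarrow> 'v set" and E :: "'i \<Rightarrow> 'v \<Rightarrow> 'v \<Rightarrow> bool"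
    and VJ :: "'j set" and EJ :: "'j \<Rightarrow> 'j \<Rightarrow> bool" and \<iota> :: "'i \<Rightarrow> 'j \<Rightarrow> 'v"
  assumes "\<forall>i\<in>I. is_graph (V i) (E i)"
    and "is_graph VJ EJ"
    and "\<forall>i\<in>I. inj_on (\<iota> i) VJ \<and> \<iota> i ` VJ \<subseteq> V i"
    and "\<forall>i\<in>I. \<forall>x\<in>VJ. \<forall>y\<in>VJ. E i (\<iota> i x) (\<iota> i y) \<longleftrightarrow> EJ x y"
    and "\<forall>x\<in>VJ. \<forall>y\<in>VJ. gdist EJ x y \<le> 2"
  shows "\<forall>i\<in>I. \<forall>u\<in>V i. \<forall>v\<in>V i.
           gdist (amal_E I E VJ \<iota>) (amal_emb VJ \<iota> i u) (amal_emb VJ \<iota> i v) = gdist (E i) u v"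
proof (intro ballI antisym)
  fix i u v assume i: "i \<in> I" and u: "u \<in> V i" and v: "v \<in> V i"
  show "gdist (amal_E I E VJ \<iota>) (amal_emb VJ \<iota> i u) (amal_emb VJ \<iota> i v) \<le> gdist (E i) u v"
    by (rule gdist_hom) (use i in \<open>auto simp: amal_E_def\<close>)
  show "gdist (E i) u v \<le> gdist (amal_E I E VJ \<iota>) (amal_emb VJ \<iota> i u) (amal_emb VJ \<iota> i v)"
    unfolding gdist_def[of "amal_E I E VJ \<iota>"]
  proof (rule INF_greatest)
    fix xs assume xs: "xs \<in> walks (amal_E I E VJ \<iota>) (amal_emb VJ \<iota> i u) (amal_emb VJ \<iota> i v)"
    have ne: "xs \<noteq> []" and l: "last xs = amal_emb VJ \<iota> i v" using xs unfolding walks_def by auto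
    have k: "length xs - 1 < length xs" using ne by simp
    have "xs ! (length xs - 1) = amal_emb VJ \<iota> i v" using l ne by (simp add: last_conv_nth)
    then show "gdist (E i) u v \<le> enat (length xs - 1)"
      using walk_back[OF assms(1-4) i u xs assms(5) k] v by blast
  qed
qed

end
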